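(* Let $p>1$ and $\lambda<\pi^2$ be fixed. For $h\in[0,1)$ let $a_h(x)=1$ for $x\in[0,\tfrac{1-h}{2}]\cup[\tfrac{1+h}{2},1]$ and $a_h(x)=0$ for $x\in(\tfrac{1-h}{2},\tfrac{1+h}{2})$, and for every $h\in[0,1)$ let $u_h$ be a positive solution of $$-u''=\lambda u+a_h(x)u^p \ \text{ in } (0,1),\qquad u(0)=u(1)=0.$$ Then $\lim_{h\uparrow1}\|u_h\|_\infty=+\infty$ and, moreover, $\lim_{h\uparrow1}u_h(x)=+\infty$ for all $x\in(0,1)$.
   Context: A solution is a function $u\in\mathcal{C}^1([0,1])$ with $u'$ absolutely continuous satisfying the equation a.e. and the boundary conditions; a positive solution satisfies $u(x)>0$ for all $x\in(0,1)$. The choice of $u_h$ for each $h$ is arbitrary among the positive solutions. *)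

theory Defs
  imports "HOL-Analysis.Analysis"
begin

definition a_coef :: "real \<Rightarrow> real \<Rightarrow> real" where
  "a_coef h x = (if (1 - h) / 2 < x \<and> x < (1 + h) / 2 then 0 else 1)"

text \<open>u is C^1 on [0,1] with derivative v, v absolutely continuous with
  v' = -(lambda u + a u^p) a.e.; equivalently v(x) = v(0) + Lebesgue integral
  of an integrable function equal a.e. to -(lambda u + a u^p).\<close>
definition is_solution :: "real \<Rightarrow> real \<Rightarrow> (real \<Rightarrow> real) \<Rightarrow> (real \<Rightarrow> real) \<Rightarrow> bool" where
  "is_solution p lam a u \<longleftrightarrow>
     (\<exists>v. (\<forall>x\<in>{0..1}. (u has_real_derivative v x) (at x within {0..1}))
        \<and> continuous_on {0..1} v
        \<and> set_integrable lborel {0..1} (\<lambda>t. lam * u t + a t * u t powr p)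
        \<and> (\<forall>x\<in>{0..1}. v x = v 0 - (LINT t:{0..x}|lborel. lam * u t + a t * u t powr p)))
     \<and> u 0 = 0 \<and> u 1 = 0"

definition is_positive_solution :: "real \<Rightarrow> real \<Rightarrow> (real \<Rightarrow> real) \<Rightarrow> (real \<Rightarrow> real) \<Rightarrow> bool" where
  "is_positive_solution p lam a u \<longleftrightarrow> is_solution p lam a u \<and> (\<forall>x\<in>{0<..<1}. u x > 0)"

definition sup_norm01 :: "(real \<Rightarrow> real) \<Rightarrow> real" where
  "sup_norm01 u = (SUP x\<in>{0..1}. \<bar>u x\<bar>)"

end

theory Submission
  imports Defs
begin


definition Sf :: "real \<Rightarrow> real \<Rightarrow> real" where
  "Sf l t = (if l > 0 then sin (sqrt l * t) / sqrt l else if l = 0 then t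
             else sinh (sqrt (- l) * t) / sqrt (- l))"

definition Cf :: "real \<Rightarrow> real \<Rightarrow> real" where
  "Cf l t = (if l > 0 then cos (sqrt l * t) else if l = 0 then 1
             else cosh (sqrt (- l) * t))"

lemma Sf_deriv: "(Sf l has_real_derivative Cf l t) (at t)"
proof (cases "l > 0")
  case True
  have "sqrt l * sqrt l = l" using True by simp
  then show ?thesis using True unfolding Sf_def Cf_def
    by (auto intro!: derivative_eq_intros simp: field_simps)
next
  case False
  show ?thesis
  proof (cases "l = 0")
    case True then show ?thesis unfolding Sf_def Cf_def by (auto intro!: derivative_eq_intros)
  next
    case False
    with \<open>\<not> l > 0\<close> have l: "- l > 0" by simp
    have "sqrt (-l) * sqrt (-l) = -l" using l by simp
    then show ?thesis using \<open>\<not> l > 0\<close> False l unfolding Sf_def Cf_def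
      by (auto intro!: derivative_eq_intros simp: field_simps mult.assoc[symmetric])
  qed
qed

lemma Cf_deriv: "(Cf l has_real_derivative - l * Sf l t) (at t)"
proof (cases "l > 0")
  case True
  have "sqrt l * sqrt l = l" using True by simp
  then show ?thesis using True unfolding Sf_def Cf_def
    by (auto intro!: derivative_eq_intros simp: field_simps)
next
  case False
  show ?thesis
  proof (cases "l = 0")
    case True then show ?thesis unfolding Sf_def Cf_def by (auto intro!: derivative_eq_intros)
  next
    case False
    with \<open>\<not> l > 0\<close> have l: "- l > 0" by simp
    have "sqrt (-l) * sqrt (-l) = -l" using l by simp
    then show ?thesis using \<open>\<not> l > 0\<close> False l unfolding Sf_def Cf_def
      by (auto intro!: derivative_eq_intros simp: field_simps mult.assoc[symmetric])
  qed
qed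

lemma Sf_0 [simp]: "Sf l 0 = 0" and Cf_0 [simp]: "Cf l 0 = 1"
  by (auto simp: Sf_def Cf_def)

lemma Sf_pos: assumes "l < pi^2" "0 < t" "t \<le> 1" shows "Sf l t > 0"
proof (cases "l > 0")
  case True
  have "sqrt l < sqrt (pi^2)" using assms(1) by (simp only: real_sqrt_less_iff)
  then have "sqrt l < pi" by simp
  then have "sqrt l * t < pi" using assms True
    by (smt (verit) mult_left_le real_sqrt_gt_zero)
  moreover have "0 < sqrt l * t" using True assms by simp
  ultimately have "sin (sqrt l * t) > 0" by (intro sin_gt_zero)
  then show ?thesis using True by (simp add: Sf_def)
next
  case False
  then show ?thesis using assms by (auto simp: Sf_def)
qed

lemma Sf_cont: "continuous_on A (Sf l)"
  using Sf_deriv by (meson DERIV_continuous continuous_at_imp_continuous_on)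
lemma Cf_cont: "continuous_on A (Cf l)"
  using Cf_deriv by (meson DERIV_continuous continuous_at_imp_continuous_on)

lemma a_coef_isCont:
  assumes "x \<noteq> (1-h)/2" "x \<noteq> (1+h)/2"
  shows "isCont (a_coef h) x"
proof (cases "(1-h)/2 < x \<and> x < (1+h)/2")
  case True
  have "eventually (\<lambda>t. t \<in> {(1-h)/2<..<(1+h)/2}) (nhds x)"
    using True by (intro eventually_nhds_in_open) auto
  then have "eventually (\<lambda>t. a_coef h t = 0) (nhds x)"
    by (rule eventually_mono) (simp add: a_coef_def)
  then show ?thesis by (subst isCont_cong) auto
next
  case False
  then have F: "x < (1-h)/2 \<or> x > (1+h)/2 \<or> (1+h)/2 \<le> (1-h)/2" using assms by auto
  have "eventually (\<lambda>t. t \<in> - {(1-h)/2..(1+h)/2}) (nhds x)"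
    using F False assms by (intro eventually_nhds_in_open) auto
  then have "eventually (\<lambda>t. a_coef h t = 1) (nhds x)"
    by (rule eventually_mono) (auto simp add: a_coef_def)
  then show ?thesis by (subst isCont_cong) auto
qed

lemma sol_reg:
  assumes "is_positive_solution p lam (a_coef h) u"
  obtains v where "continuous_on {0..1} v" "continuous_on {0..1} u"
    "\<And>x. x \<in> {0<..<1} \<Longrightarrow> (u has_real_derivative v x) (at x)"
    "\<And>x. x \<in> {0<..<1} \<Longrightarrow> x \<noteq> (1-h)/2 \<Longrightarrow> x \<noteq> (1+h)/2 \<Longrightarrow>
        (v has_real_derivative -(lam * u x + a_coef h x * u x powr p)) (at x)"
    "u 0 = 0" "u 1 = 0" "\<And>x. x \<in> {0<..<1} \<Longrightarrow> u x > 0"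
proof -
  define f where "f = (\<lambda>t. lam * u t + a_coef h t * u t powr p)"
  have sol: "is_solution p lam (a_coef h) u" and pos: "\<forall>x\<in>{0<..<1}. u x > 0"
    using assms unfolding is_positive_solution_def by (rule conjunct1, rule conjunct2)
  have E: "\<exists>v. (\<forall>x\<in>{0..1}. (u has_real_derivative v x) (at x within {0..1}))
     \<and> continuous_on {0..1} v \<and> set_integrable lborel {0..1} f
     \<and> (\<forall>x\<in>{0..1}. v x = v 0 - (LINT t:{0..x}|lborel. f t))"
    unfolding f_def by (rule conjunct1[OF sol[unfolded is_solution_def]])
  have b: "u 0 = 0" "u 1 = 0" using sol unfolding is_solution_def by (rule conjunct2[THEN conjunct1], rule conjunct2[THEN conjunct2])
  from E obtain v where H: "(\<forall>x\<in>{0..1}. (u has_real_derivative v x) (at x within {0..1}))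
     \<and> continuous_on {0..1} v \<and> set_integrable lborel {0..1} f
     \<and> (\<forall>x\<in>{0..1}. v x = v 0 - (LINT t:{0..x}|lborel. f t))" by (elim exE)
  have du: "\<forall>x\<in>{0..1}. (u has_real_derivative v x) (at x within {0..1})" using H by (elim conjE)
  have cv: "continuous_on {0..1} v" using H by (elim conjE)
  have si: "set_integrable lborel {0..1} f" using H by (elim conjE)
  have vf: "\<forall>x\<in>{0..1}. v x = v 0 - (LINT t:{0..x}|lborel. f t)" using H by (elim conjE)
  have cu: "continuous_on {0..1} u"
    unfolding continuous_on_eq_continuous_within using du DERIV_continuous by blast
  have du': "(u has_real_derivative v x) (at x)" if "x \<in> {0<..<1}" for x
  proof -
    have "at x within {0..1} = at x" using that by (intro at_within_interior) auto
    moreover have "(u has_real_derivative v x) (at x within {0..1})" using du that by auto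
    ultimately show ?thesis by simp
  qed
  have fint: "f integrable_on {0..1}" using set_borel_integral_eq_integral(1)[OF si] .
  have vI: "v 0 - integral {0..x} f = v x" if "x \<in> {0..1}" for x
  proof -
    have si': "set_integrable lborel {0..x} f"
      using that by (intro set_integrable_subset[OF si]) auto
    have "v x = v 0 - (LINT t:{0..x}|lborel. f t)" using vf that by blast
    also have "(LINT t:{0..x}|lborel. f t) = integral {0..x} f"
      by (rule set_borel_integral_eq_integral(2)[OF si'])
    finally show ?thesis by simp
  qed
  have dv: "(v has_real_derivative -(lam * u x + a_coef h x * u x powr p)) (at x)"
    if x: "x \<in> {0<..<1}" "x \<noteq> (1-h)/2" "x \<noteq> (1+h)/2" for x
  proof -
    have iu: "isCont u x" using du'[OF x(1)] by (rule DERIV_isCont)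
    have ia: "isCont (a_coef h) x" using a_coef_isCont x(2,3) .
    have ux: "u x \<noteq> 0" using x(1) pos by force
    have "isCont f x" unfolding f_def using iu ia ux by (intro continuous_intros) auto
    then have cf: "continuous (at x within ({0..1} - {})) f"
      using continuous_at_imp_continuous_at_within by blast
    have "((\<lambda>y. integral {0..y} f) has_vector_derivative f x) (at x within ({0..1} - {}))"
      using x by (intro integral_has_vector_derivative_continuous_at[OF fint _ _ cf]) auto
    then have "((\<lambda>y. integral {0..y} f) has_real_derivative f x) (at x within {0..1})"
      by (simp add: has_real_derivative_iff_has_vector_derivative)
    then have "((\<lambda>y. v 0 - integral {0..y} f) has_real_derivative - f x) (at x within {0..1})"
      by (auto intro!: derivative_eq_intros)
    then have "(v has_real_derivative - f x) (at x within {0..1})"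
      by (rule has_field_derivative_transform_within[where d=1]) (use x vI in auto)
    moreover have "at x within {0..1} = at x" using x by (intro at_within_interior) auto
    ultimately show ?thesis by (simp add: f_def)
  qed
  show ?thesis
    by (rule that[OF cv cu du' dv b]) (use pos in auto)
qed


lemma energy_const:
  fixes u v :: "real \<Rightarrow> real"
  assumes ab: "\<alpha> < \<beta>" and cu: "continuous_on {\<alpha>..\<beta>} u" and cv: "continuous_on {\<alpha>..\<beta>} v"
    and pos: "\<And>x. \<alpha> \<le> x \<Longrightarrow> x \<le> \<beta> \<Longrightarrow> u x > 0"
    and du: "\<And>x. \<alpha> < x \<Longrightarrow> x < \<beta> \<Longrightarrow> (u has_real_derivative v x) (at x)"
    and dv: "\<And>x. \<alpha> < x \<Longrightarrow> x < \<beta> \<Longrightarrow> (v has_real_derivative -(lam * u x + u x powr p)) (at x)"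
    and p: "p > 0"
  shows "v \<beta>^2 + lam * u \<beta>^2 + 2/(p+1) * u \<beta> powr (p+1) = v \<alpha>^2 + lam * u \<alpha>^2 + 2/(p+1) * u \<alpha> powr (p+1)"
proof -
  define E where "E = (\<lambda>x. v x^2 + lam * u x^2 + 2/(p+1) * u x powr (p+1))"
  have "E \<beta> = E \<alpha>"
  proof (rule DERIV_isconst_end[OF ab])
    have "\<forall>x\<in>{\<alpha>..\<beta>}. u x \<noteq> 0" using pos by force
    then show "continuous_on {\<alpha>..\<beta>} E" unfolding E_def
      using cu cv by (intro continuous_intros) auto
  next
    fix x assume x: "\<alpha> < x" "x < \<beta>"
    have ux: "u x > 0" using pos x by auto
    have dp: "((\<lambda>x. u x powr (p+1)) has_real_derivative (u x powr (p+1)) * (0 * ln (u x) + v x * (p+1) / u x)) (at x)"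
      by (rule DERIV_powr[OF du[OF x] ux]) (rule DERIV_const)
    have eq: "u x powr (p+1) / u x = u x powr p"
      using ux by (simp add: powr_add)
    have d1: "((\<lambda>z. (v z)^2) has_real_derivative 2 * v x * (-(lam * u x + u x powr p))) (at x)"
      using DERIV_power[OF dv[OF x], of 2] by (simp add: algebra_simps)
    have d2: "((\<lambda>z. (u z)^2) has_real_derivative 2 * u x * v x) (at x)"
      using DERIV_power[OF du[OF x], of 2] by (simp add: algebra_simps)
    have "(E has_real_derivative 2 * v x * (-(lam * u x + u x powr p)) + lam * (2 * u x * v x)
        + 2/(p+1) * ((u x powr (p+1)) * (0 * ln (u x) + v x * (p+1) / u x))) (at x)"
      unfolding E_def
      by (intro DERIV_add DERIV_cmult d1 d2 dp)
    moreover have "2 * v x * (-(lam * u x + u x powr p)) + lam * (2 * u x * v x)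
        + 2/(p+1) * ((u x powr (p+1)) * (0 * ln (u x) + v x * (p+1) / u x)) = 0"
    proof -
      have "(u x powr (p+1)) * (0 * ln (u x) + v x * (p+1) / u x) = (p+1) * v x * (u x powr (p+1) / u x)"
        by simp
      also have "\<dots> = (p+1) * v x * u x powr p" using eq by simp
      finally show ?thesis using p by (simp add: field_simps)
    qed
    ultimately show "(E has_real_derivative 0) (at x)" by simp
  qed
  then show ?thesis unfolding E_def .
qed

lemma wronsk_const:
  fixes y1 Y1 y2 Y2 :: "real \<Rightarrow> real"
  assumes ab: "\<alpha> < \<beta>"
    and c: "continuous_on {\<alpha>..\<beta>} y1" "continuous_on {\<alpha>..\<beta>} Y1" "continuous_on {\<alpha>..\<beta>} y2" "continuous_on {\<alpha>..\<beta>} Y2"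
    and d1: "\<And>x. \<alpha> < x \<Longrightarrow> x < \<beta> \<Longrightarrow> (y1 has_real_derivative Y1 x) (at x)"
    and d2: "\<And>x. \<alpha> < x \<Longrightarrow> x < \<beta> \<Longrightarrow> (Y1 has_real_derivative -(lam * y1 x)) (at x)"
    and d3: "\<And>x. \<alpha> < x \<Longrightarrow> x < \<beta> \<Longrightarrow> (y2 has_real_derivative Y2 x) (at x)"
    and d4: "\<And>x. \<alpha> < x \<Longrightarrow> x < \<beta> \<Longrightarrow> (Y2 has_real_derivative -(lam * y2 x)) (at x)"
    and x: "\<alpha> \<le> x" "x \<le> \<beta>"
  shows "y1 x * Y2 x - Y1 x * y2 x = y1 \<alpha> * Y2 \<alpha> - Y1 \<alpha> * y2 \<alpha>"
proof -
  define W where "W = (\<lambda>x. y1 x * Y2 x - Y1 x * y2 x)"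
  have "W x = W \<alpha>"
  proof (rule DERIV_isconst2[OF ab _ _ x])
    show "continuous_on {\<alpha>..\<beta>} W" unfolding W_def using c by (intro continuous_intros)
  next
    fix t assume t: "\<alpha> < t" "t < \<beta>"
    show "(W has_real_derivative 0) (at t)" unfolding W_def
      by (rule DERIV_cong[OF DERIV_diff[OF DERIV_mult[OF d1[OF t] d4[OF t]] DERIV_mult[OF d2[OF t] d3[OF t]]]])
        (simp add: algebra_simps)
  qed
  then show ?thesis unfolding W_def .
qed

lemma layer:
  fixes u v :: "real \<Rightarrow> real"
  assumes ab: "a < b" and bd: "b - a \<le> d" and e: "e = a \<or> e = b" and ue: "u e = 0"
    and cu: "continuous_on {a..b} u"
    and du: "\<And>x. a < x \<Longrightarrow> x < b \<Longrightarrow> (u has_real_derivative v x) (at x)"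
    and vb: "\<And>x. a < x \<Longrightarrow> x < b \<Longrightarrow> (v x)^2 \<le> E + L * (u x)^2"
    and L: "L \<ge> 0"
    and pos: "\<And>x. a < x \<Longrightarrow> x < b \<Longrightarrow> u x > 0"
    and nn: "\<And>x. a \<le> x \<Longrightarrow> x \<le> b \<Longrightarrow> u x \<ge> 0"
  obtains Um where "\<And>x. a \<le> x \<Longrightarrow> x \<le> b \<Longrightarrow> u x \<le> Um" "Um^2 \<le> d^2 * (E + L * Um^2)"
proof -
  obtain xM where xM: "xM \<in> {a..b}" and mx: "\<And>x. x \<in> {a..b} \<Longrightarrow> u x \<le> u xM"
    using continuous_attains_sup[OF compact_Icc _ cu] ab by auto
  have "u ((a+b)/2) > 0" using pos ab by auto
  then have uM: "u xM > 0" using mx[of "(a+b)/2"] ab by auto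
  have key: "(u xM)^2 \<le> d^2 * (E + L * (u xM)^2)"
    if "\<xi> \<in> {a<..<b}" "\<bar>u xM\<bar> = \<bar>v \<xi>\<bar> * l" "0 \<le> l" "l \<le> d" for \<xi> l
  proof -
    have "0 \<le> u \<xi>" "u \<xi> \<le> u xM" using that(1) nn mx by auto
    then have "(u \<xi>)^2 \<le> (u xM)^2" by (intro power_mono) auto
    then have A: "(v \<xi>)^2 \<le> E + L * (u xM)^2"
      using vb[of \<xi>] that(1) L by (smt (verit) greaterThanLessThan_iff mult_left_mono)
    have "(u xM)^2 = (v \<xi>)^2 * l^2" using that(2)
      by (metis power2_abs power_mult_distrib abs_of_nonneg that(3))
    also have "\<dots> \<le> (E + L * (u xM)^2) * d^2"
      using A that(3,4) by (intro mult_mono power_mono) (auto intro: order_trans[OF zero_le_power2])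
    finally show ?thesis by (simp add: mult.commute)
  qed
  have "(u xM)^2 \<le> d^2 * (E + L * (u xM)^2)"
  proof (cases "e = a")
    case True
    then have "xM \<noteq> a" using ue uM by auto
    then have lt: "a < xM" using xM by auto
    have "continuous_on {a..xM} u" by (rule continuous_on_subset[OF cu]) (use xM in auto)
    then obtain \<xi> where \<xi>: "a < \<xi>" "\<xi> < xM" "u xM - u a = (\<lambda>h. v \<xi> * h) (xM - a)"
      using mvt[OF lt, of u "\<lambda>x h. v x * h"] du xM
      by (metis atLeastAtMost_iff has_field_derivative_def less_le_trans)
    show ?thesis
      by (rule key[of \<xi> "xM - a"]) (use \<xi> xM True ue bd in \<open>auto simp: abs_mult\<close>)
  next
    case False
    then have eb: "e = b" using e by auto
    then have "xM \<noteq> b" using ue uM by auto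
    then have lt: "xM < b" using xM by auto
    have "continuous_on {xM..b} u" by (rule continuous_on_subset[OF cu]) (use xM in auto)
    then obtain \<xi> where \<xi>: "xM < \<xi>" "\<xi> < b" "u b - u xM = (\<lambda>h. v \<xi> * h) (b - xM)"
      using mvt[OF lt, of u "\<lambda>x h. v x * h"] du xM
      by (metis atLeastAtMost_iff has_field_derivative_def le_less_trans)
    have "\<bar>u xM\<bar> = \<bar>v \<xi> * (b - xM)\<bar>" using \<xi>(3) eb ue
      by (metis abs_minus_cancel diff_0 simp_thms(6))
    then have "\<bar>u xM\<bar> = \<bar>v \<xi>\<bar> * (b - xM)" using lt by (simp add: abs_mult)
    then show ?thesis
      by (intro key[of \<xi> "b - xM"]) (use \<xi> xM eb ue bd in auto)
  qed
  then show ?thesis using that[of "u xM"] mx by auto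
qed


lemma final_arith:
  fixes M Um d E L A l c p :: real
  assumes M: "M > 0" "M \<le> Um" and U: "Um^2 \<le> d^2 * (E + L*Um^2)"
    and E: "E \<le> A*M^2 + l*M^2 + c*M powr (p+1)"
    and L: "0 \<le> L" "L \<le> l" and c: "c \<ge> 0" and A: "A \<ge> 0" and l: "l \<ge> 0"
  shows "1 \<le> d^2 * (A + 2*l) + d^2 * c * M powr (p-1)"
proof -
  have "M powr (p+1) = M powr ((p-1) + 2)" by (simp add: algebra_simps)
  also have "\<dots> = M powr (p-1) * M powr 2" by (rule powr_add)
  also have "M powr 2 = M^2" using M by simp
  finally have pw: "M powr (p+1) = M powr (p-1) * M^2" .
  define K where "K = A + l + c * M powr (p-1)"
  have K0: "K \<ge> 0" unfolding K_def using A l c by simp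
  have "E \<le> K * M^2" using E pw unfolding K_def by (simp add: algebra_simps)
  also have "\<dots> \<le> K * Um^2" using M K0 by (intro mult_left_mono power_mono) auto
  finally have "E \<le> K * Um^2" .
  then have "Um^2 \<le> d^2 * (K * Um^2 + l * Um^2)"
  proof -
    have "L * Um^2 \<le> l * Um^2" using L by (intro mult_right_mono) auto
    then have "E + L*Um^2 \<le> K * Um^2 + l * Um^2" using \<open>E \<le> K * Um^2\<close> by linarith
    then show ?thesis using U by (meson order_trans mult_left_mono zero_le_power2)
  qed
  then have "1 * Um^2 \<le> (d^2 * (K + l)) * Um^2" by (simp add: algebra_simps)
  moreover have "Um^2 > 0" using M by simp
  ultimately have "1 \<le> d^2 * (K + l)" by (meson mult_le_cancel_right not_le)
  then show ?thesis unfolding K_def by (simp add: algebra_simps)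
qed



lemma key:
  fixes p lam h Cm s0 :: real and u :: "real \<Rightarrow> real"
  assumes p: "p > 1" and lam: "lam < pi^2" and h: "1/2 \<le> h" "h < 1"
    and sol: "is_positive_solution p lam (a_coef h) u"
    and Cm: "\<And>t. 0 \<le> t \<Longrightarrow> t \<le> 1 \<Longrightarrow> \<bar>Cf lam t\<bar> \<le> Cm"
    and s0: "\<And>t. 1/2 \<le> t \<Longrightarrow> t \<le> 1 \<Longrightarrow> s0 \<le> Sf lam t" "s0 > 0"
  shows "1 \<le> ((1-h)/2)^2 * (((1+Cm)/s0)^2 + 2*\<bar>lam\<bar>) + ((1-h)/2)^2 * (2/(p+1)) * (max (u ((1-h)/2)) (u (1-(1-h)/2))) powr (p-1)"
    and "\<And>x. (1-h)/2 \<le> x \<Longrightarrow> x \<le> 1-(1-h)/2 \<Longrightarrow>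
           u x * Sf lam h = u ((1-h)/2) * Sf lam (1-(1-h)/2-x) + u (1-(1-h)/2) * Sf lam (x-(1-h)/2)"
    and "u ((1-h)/2) > 0" "u (1-(1-h)/2) > 0"
proof -
  define d where "d = (1-h)/2"
  obtain v where cv: "continuous_on {0..1} v" and cu: "continuous_on {0..1} u"
    and du: "\<And>x. x \<in> {0<..<1} \<Longrightarrow> (u has_real_derivative v x) (at x)"
    and dv: "\<And>x. x \<in> {0<..<1} \<Longrightarrow> x \<noteq> (1-h)/2 \<Longrightarrow> x \<noteq> (1+h)/2 \<Longrightarrow>
        (v has_real_derivative -(lam * u x + a_coef h x * u x powr p)) (at x)"
    and u0: "u 0 = 0" and u1: "u 1 = 0" and pos: "\<And>x. x \<in> {0<..<1} \<Longrightarrow> u x > 0"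
    using sol_reg[OF sol] by metis
  have d0: "0 < d" and d4: "d \<le> 1/4" and dd: "d < 1 - d" and hd: "1 - d - d = h" and hd2: "(1+h)/2 = 1 - d"
    using h unfolding d_def by (auto simp: field_simps)
  note d1 = d_def[symmetric]
  have hd': "1 - d * 2 = h" using hd by simp
  have nn: "u x \<ge> 0" if "0 \<le> x" "x \<le> 1" for x
    using pos[of x] u0 u1 that by (cases "x = 0 \<or> x = 1") (auto simp: less_eq_real_def)
  have m1: "u d > 0" and m2: "u (1-d) > 0" using pos d0 dd by auto
  have dvm: "(v has_real_derivative -(lam * u x)) (at x)" if "d < x" "x < 1 - d" for x
  proof -
    have "a_coef h x = 0" using that unfolding a_coef_def d_def by (auto simp: field_simps)
    then show ?thesis using dv[of x] that d0 dd hd2 unfolding d1 by auto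
  qed
  have dum: "(u has_real_derivative v x) (at x)" if "d < x" "x < 1 - d" for x
    using du that d0 dd by auto
  have cum: "continuous_on {d..1-d} u" by (rule continuous_on_subset[OF cu]) (use d0 dd in auto)
  have cvm: "continuous_on {d..1-d} v" by (rule continuous_on_subset[OF cv]) (use d0 dd in auto)
  define \<sigma> where "\<sigma> = (\<lambda>x. Sf lam (x - d))"
  define \<Sigma> where "\<Sigma> = (\<lambda>x. Cf lam (x - d))"
  define \<tau> where "\<tau> = (\<lambda>x. Sf lam (1 - d - x))"
  define T where "T = (\<lambda>x. - Cf lam (1 - d - x))"
  have d\<sigma>: "(\<sigma> has_real_derivative \<Sigma> x) (at x)" for x
  proof -
    have "((\<lambda>x. x - d) has_real_derivative 1) (at x)" by (auto intro!: derivative_eq_intros)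
    from DERIV_chain2[OF Sf_deriv this] show ?thesis unfolding \<sigma>_def \<Sigma>_def by simp
  qed
  have d\<Sigma>: "(\<Sigma> has_real_derivative -(lam * \<sigma> x)) (at x)" for x
  proof -
    have "((\<lambda>x. x - d) has_real_derivative 1) (at x)" by (auto intro!: derivative_eq_intros)
    from DERIV_chain2[OF Cf_deriv this] show ?thesis unfolding \<sigma>_def \<Sigma>_def by simp
  qed
  have d\<tau>: "(\<tau> has_real_derivative T x) (at x)" for x
  proof -
    have "((\<lambda>x. 1 - d - x) has_real_derivative -1) (at x)" by (auto intro!: derivative_eq_intros)
    from DERIV_chain2[OF Sf_deriv this] show ?thesis unfolding \<tau>_def T_def by simp
  qed
  have dT: "(T has_real_derivative -(lam * \<tau> x)) (at x)" for x
  proof -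
    have "((\<lambda>x. 1 - d - x) has_real_derivative -1) (at x)" by (auto intro!: derivative_eq_intros)
    from DERIV_minus[OF DERIV_chain2[OF Cf_deriv this]] show ?thesis unfolding \<tau>_def T_def by simp
  qed
  have c\<sigma>: "continuous_on A \<sigma>" for A unfolding \<sigma>_def by (intro continuous_on_compose2[OF Sf_cont] continuous_intros) auto
  have c\<Sigma>: "continuous_on A \<Sigma>" for A unfolding \<Sigma>_def by (intro continuous_on_compose2[OF Cf_cont] continuous_intros) auto
  have c\<tau>: "continuous_on A \<tau>" for A unfolding \<tau>_def by (intro continuous_on_compose2[OF Sf_cont] continuous_intros) auto
  have cT: "continuous_on A T" for A unfolding T_def by (intro continuous_on_compose2[OF Cf_cont] continuous_intros) auto
  have W1: "u x * \<Sigma> x - v x * \<sigma> x = u d" if "d \<le> x" "x \<le> 1 - d" for x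
    using wronsk_const[OF dd cum cvm c\<sigma> c\<Sigma> dum dvm d\<sigma> d\<Sigma> that]
    by (simp add: \<sigma>_def \<Sigma>_def)
  have W2': "u x * T x - v x * \<tau> x = u d * T d - v d * \<tau> d" if "d \<le> x" "x \<le> 1 - d" for x
    using wronsk_const[OF dd cum cvm c\<tau> cT dum dvm d\<tau> dT that] by simp
  have W2e: "u (1-d) * T (1-d) - v (1-d) * \<tau> (1-d) = - u (1-d)" by (simp add: \<tau>_def T_def)
  have W2: "u x * T x - v x * \<tau> x = - u (1-d)" if "d \<le> x" "x \<le> 1 - d" for x
    using W2'[OF that] W2'[of "1-d"] W2e dd by simp
  have W3': "\<sigma> x * T x - \<Sigma> x * \<tau> x = \<sigma> d * T d - \<Sigma> d * \<tau> d" if "d \<le> x" "x \<le> 1 - d" for x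
    using wronsk_const[OF dd c\<sigma> c\<Sigma> c\<tau> cT _ _ _ _ that] d\<sigma> d\<Sigma> d\<tau> dT by blast
  have W3: "\<sigma> x * T x - \<Sigma> x * \<tau> x = - Sf lam h" if "d \<le> x" "x \<le> 1 - d" for x
    using W3'[OF that] by (simp add: \<sigma>_def \<Sigma>_def \<tau>_def hd)
  have formula: "u x * Sf lam h = u d * \<tau> x + u (1-d) * \<sigma> x" if "d \<le> x" "x \<le> 1 - d" for x
  proof -
    have "(u x * \<Sigma> x - v x * \<sigma> x) * \<tau> x - (u x * T x - v x * \<tau> x) * \<sigma> x = u d * \<tau> x + u (1-d) * \<sigma> x"
      using W1[OF that] W2[OF that] by simp
    moreover have "(u x * \<Sigma> x - v x * \<sigma> x) * \<tau> x - (u x * T x - v x * \<tau> x) * \<sigma> x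
        = - u x * (\<sigma> x * T x - \<Sigma> x * \<tau> x)" by (simp add: algebra_simps)
    ultimately show ?thesis using W3[OF that] by simp
  qed
  show "\<And>x. (1-h)/2 \<le> x \<Longrightarrow> x \<le> 1-(1-h)/2 \<Longrightarrow>
           u x * Sf lam h = u ((1-h)/2) * Sf lam (1-(1-h)/2-x) + u (1-(1-h)/2) * Sf lam (x-(1-h)/2)"
    using formula unfolding d1 \<tau>_def \<sigma>_def by simp
  show "u ((1-h)/2) > 0" "u (1-(1-h)/2) > 0" using m1 m2 unfolding d1 .
  show "1 \<le> ((1-h)/2)^2 * (((1+Cm)/s0)^2 + 2*\<bar>lam\<bar>) + ((1-h)/2)^2 * (2/(p+1)) * (max (u ((1-h)/2)) (u (1-(1-h)/2))) powr (p-1)"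
  proof -
    define c where "c = 2/(p+1)"
    define L where "L = max 0 (-lam)"
    define A where "A = ((1+Cm)/s0)^2"
    define EL where "EL = v d^2 + lam * u d^2 + c * u d powr (p+1)"
    define ER where "ER = v (1-d)^2 + lam * u (1-d)^2 + c * u (1-d) powr (p+1)"
    have c0: "c \<ge> 0" unfolding c_def using p by simp
    have L0: "L \<ge> 0" "L \<le> \<bar>lam\<bar>" unfolding L_def by auto
    have A0: "A \<ge> 0" unfolding A_def by simp
    have Lb: "- lam * y^2 \<le> L * y^2" for y unfolding L_def
      by (intro mult_right_mono) auto
    have Sh: "Sf lam h \<ge> s0" using s0(1)[of h] h by auto
    have Cm0: "\<bar>Cf lam h\<bar> \<le> Cm" using Cm[of h] h by auto
    have vbL: "(v x)^2 \<le> EL + L * (u x)^2" if x: "0 < x" "x < d" for x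
    proof -
      have e: "v d^2 + lam * u d^2 + 2/(p+1) * u d powr (p+1) = v x^2 + lam * u x^2 + 2/(p+1) * u x powr (p+1)"
      proof (rule energy_const[OF x(2)])
        show "continuous_on {x..d} u" by (rule continuous_on_subset[OF cu]) (use x dd in auto)
        show "continuous_on {x..d} v" by (rule continuous_on_subset[OF cv]) (use x dd in auto)
        show "\<And>t. x \<le> t \<Longrightarrow> t \<le> d \<Longrightarrow> u t > 0" using pos x dd by auto
        show "\<And>t. x < t \<Longrightarrow> t < d \<Longrightarrow> (u has_real_derivative v t) (at t)" using du x dd by auto
        show "p > 0" using p by simp
        fix t assume t: "x < t" "t < d"
        have "a_coef h t = 1" using t unfolding a_coef_def d_def by auto
        then show "(v has_real_derivative -(lam * u t + u t powr p)) (at t)"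
          using dv[of t] t x dd hd2 unfolding d1 by auto
      qed
      have "0 \<le> c * u x powr (p+1)" using c0 by simp
      then show ?thesis using e Lb[of "u x"] unfolding EL_def c_def by linarith
    qed
    have vbR: "(v x)^2 \<le> ER + L * (u x)^2" if x: "1 - d < x" "x < 1" for x
    proof -
      have e: "v x^2 + lam * u x^2 + 2/(p+1) * u x powr (p+1) = v (1-d)^2 + lam * u (1-d)^2 + 2/(p+1) * u (1-d) powr (p+1)"
      proof (rule energy_const[OF x(1)])
        show "continuous_on {1-d..x} u" by (rule continuous_on_subset[OF cu]) (use x dd in auto)
        show "continuous_on {1-d..x} v" by (rule continuous_on_subset[OF cv]) (use x dd in auto)
        show "\<And>t. 1-d \<le> t \<Longrightarrow> t \<le> x \<Longrightarrow> u t > 0" using pos x dd d0 by auto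
        show "\<And>t. 1-d < t \<Longrightarrow> t < x \<Longrightarrow> (u has_real_derivative v t) (at t)" using du x dd d0 by auto
        show "p > 0" using p by simp
        fix t assume t: "1-d < t" "t < x"
        have "a_coef h t = 1" using t unfolding a_coef_def d_def by (auto simp: field_simps)
        then show "(v has_real_derivative -(lam * u t + u t powr p)) (at t)"
          using dv[of t] t x dd d0 hd2 unfolding d1 by auto
      qed
      have "0 \<le> c * u x powr (p+1)" using c0 by simp
      then show ?thesis using e Lb[of "u x"] unfolding ER_def c_def by linarith
    qed
    obtain UL where UL: "\<And>x. 0 \<le> x \<Longrightarrow> x \<le> d \<Longrightarrow> u x \<le> UL" "UL^2 \<le> d^2 * (EL + L * UL^2)"
    proof (rule layer[of 0 d d 0 u v EL L])
      show "continuous_on {0..d} u" by (rule continuous_on_subset[OF cu]) (use dd in auto)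
    qed (use d0 dd u0 du vbL L0 pos nn in auto)
    obtain UR where UR: "\<And>x. 1-d \<le> x \<Longrightarrow> x \<le> 1 \<Longrightarrow> u x \<le> UR" "UR^2 \<le> d^2 * (ER + L * UR^2)"
    proof (rule layer[of "1-d" 1 d 1 u v ER L])
      show "continuous_on {1-d..1} u" by (rule continuous_on_subset[OF cu]) (use dd d0 in auto)
    qed (use d0 dd u1 du vbR L0 pos nn in auto)
    define M where "M = max (u d) (u (1-d))"
    have "1 \<le> d^2 * (A + 2*\<bar>lam\<bar>) + d^2 * c * M powr (p-1)"
    proof (cases "u (1-d) \<le> u d")
      case True
      then have M: "M = u d" unfolding M_def by simp
      have "u d * T d - v d * \<tau> d = - u (1-d)" using W2[of d] dd by simp
      then have eq: "v d * Sf lam h = u (1-d) - u d * Cf lam h"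
        by (simp add: T_def \<tau>_def hd hd' algebra_simps)
      have "\<bar>v d\<bar> * Sf lam h = \<bar>v d * Sf lam h\<bar>" using Sh s0(2) by (simp add: abs_mult)
      also have "\<dots> = \<bar>u (1-d) - u d * Cf lam h\<bar>" using eq by simp
      also have "\<dots> \<le> \<bar>u (1-d)\<bar> + \<bar>u d * Cf lam h\<bar>" by (rule abs_triangle_ineq4)
      also have "\<dots> = u (1-d) + u d * \<bar>Cf lam h\<bar>" using m1 m2 by (simp add: abs_mult)
      also have "\<dots> \<le> (1 + Cm) * M" proof -
        have "u d * \<bar>Cf lam h\<bar> \<le> u d * Cm" using Cm0 m1 by (intro mult_left_mono) auto
        then show ?thesis using M True by (simp add: algebra_simps)
      qed
      finally have "\<bar>v d\<bar> * Sf lam h \<le> (1 + Cm) * M" .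
      then have "\<bar>v d\<bar> * s0 \<le> (1 + Cm) * M" using Sh
        by (smt (verit) abs_ge_zero mult_left_mono)
      then have "\<bar>v d\<bar> \<le> (1 + Cm) / s0 * M" using s0(2) by (simp add: field_simps)
      then have "(v d)^2 \<le> ((1 + Cm) / s0 * M)^2"
        by (metis abs_ge_zero power2_abs power_mono)
      then have vd: "(v d)^2 \<le> A * M^2" unfolding A_def by (simp add: power_mult_distrib power_divide)
      have "lam * u d^2 \<le> \<bar>lam\<bar> * M^2" using M by (simp add: mult_right_mono)
      then have "EL \<le> A*M^2 + \<bar>lam\<bar>*M^2 + c*M powr (p+1)" unfolding EL_def using vd M by simp
      then show ?thesis
        using final_arith[of M UL d EL L A "\<bar>lam\<bar>" c p] M m1 UL(2) UL(1)[of d] L0 c0 A0 dd d0 by auto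
    next
      case False
      then have M: "M = u (1-d)" unfolding M_def by simp
      have "u (1-d) * \<Sigma> (1-d) - v (1-d) * \<sigma> (1-d) = u d" using W1[of "1-d"] dd by simp
      then have eq: "v (1-d) * Sf lam h = u (1-d) * Cf lam h - u d"
        by (simp add: \<Sigma>_def \<sigma>_def hd hd' algebra_simps)
      have "\<bar>v (1-d)\<bar> * Sf lam h = \<bar>v (1-d) * Sf lam h\<bar>" using Sh s0(2) by (simp add: abs_mult)
      also have "\<dots> = \<bar>u (1-d) * Cf lam h - u d\<bar>" using eq by simp
      also have "\<dots> \<le> \<bar>u (1-d) * Cf lam h\<bar> + \<bar>u d\<bar>" by (rule abs_triangle_ineq4)
      also have "\<dots> = u d + u (1-d) * \<bar>Cf lam h\<bar>" using m1 m2 by (simp add: abs_mult)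
      also have "\<dots> \<le> (1 + Cm) * M" proof -
        have "u (1-d) * \<bar>Cf lam h\<bar> \<le> u (1-d) * Cm" using Cm0 m2 by (intro mult_left_mono) auto
        then show ?thesis using M False by (simp add: algebra_simps)
      qed
      finally have "\<bar>v (1-d)\<bar> * Sf lam h \<le> (1 + Cm) * M" .
      then have "\<bar>v (1-d)\<bar> * s0 \<le> (1 + Cm) * M" using Sh
        by (smt (verit) abs_ge_zero mult_left_mono)
      then have "\<bar>v (1-d)\<bar> \<le> (1 + Cm) / s0 * M" using s0(2) by (simp add: field_simps)
      then have "(v (1-d))^2 \<le> ((1 + Cm) / s0 * M)^2"
        by (metis abs_ge_zero power2_abs power_mono)
      then have vd: "(v (1-d))^2 \<le> A * M^2" unfolding A_def by (simp add: power_mult_distrib power_divide)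
      have "lam * u (1-d)^2 \<le> \<bar>lam\<bar> * M^2" using M by (simp add: mult_right_mono)
      then have "ER \<le> A*M^2 + \<bar>lam\<bar>*M^2 + c*M powr (p+1)" unfolding ER_def using vd M by simp
      then show ?thesis
        using final_arith[of M UR d ER L A "\<bar>lam\<bar>" c p] M m2 UR(2) UR(1)[of "1-d"] L0 c0 A0 dd d0 by auto
    qed
    then show ?thesis unfolding d1 M_def A_def c_def by simp
  qed
qed



lemma pointwise_bound:
  fixes p lam :: real and U :: "real \<Rightarrow> real \<Rightarrow> real"
  assumes p: "p > 1" and lam: "lam < pi^2"
    and sol: "\<And>h. h \<in> {0..<1} \<Longrightarrow> is_positive_solution p lam (a_coef h) (U h)"
    and x0: "0 < x0" "x0 < 1"
  shows "\<exists>\<epsilon>>0. \<forall>h. 1 - \<epsilon> < h \<and> h < 1 \<longrightarrow> Z \<le> U h x0"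
proof -
  obtain tm where tm: "\<And>t. t \<in> {0..1} \<Longrightarrow> \<bar>Cf lam t\<bar> \<le> \<bar>Cf lam tm\<bar>"
    using continuous_attains_sup[OF compact_Icc _ continuous_on_rabs[OF Cf_cont], of 0 1 lam] by fastforce
  define Cm where "Cm = \<bar>Cf lam tm\<bar>"
  have Cm: "\<And>t. 0 \<le> t \<Longrightarrow> t \<le> 1 \<Longrightarrow> \<bar>Cf lam t\<bar> \<le> Cm" using tm unfolding Cm_def by auto
  obtain t1 where t1: "t1 \<in> {1/2..1}" "\<And>t. t \<in> {1/2..1} \<Longrightarrow> Sf lam t1 \<le> Sf lam t"
    using continuous_attains_inf[OF compact_Icc _ Sf_cont, of "1/2" 1 lam] by fastforce
  define s0 where "s0 = Sf lam t1"
  have s0: "\<And>t. 1/2 \<le> t \<Longrightarrow> t \<le> 1 \<Longrightarrow> s0 \<le> Sf lam t" "s0 > 0"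
    using t1 Sf_pos[OF lam, of t1] unfolding s0_def by auto
  define \<eta> where "\<eta> = min x0 (1 - x0) / 2"
  have \<eta>: "0 < \<eta>" "\<eta> \<le> x0/2" "\<eta> \<le> (1-x0)/2" using x0 unfolding \<eta>_def by auto
  obtain t2 where t2: "t2 \<in> {\<eta>..1}" "\<And>t. t \<in> {\<eta>..1} \<Longrightarrow> Sf lam t2 \<le> Sf lam t"
    using continuous_attains_inf[OF compact_Icc _ Sf_cont, of \<eta> 1 lam] \<eta> x0 by fastforce
  define smin where "smin = Sf lam t2"
  have smin: "\<And>t. \<eta> \<le> t \<Longrightarrow> t \<le> 1 \<Longrightarrow> smin \<le> Sf lam t" "smin > 0"
    using t2 Sf_pos[OF lam, of t2] \<eta> unfolding smin_def by auto
  obtain t3 where t3: "t3 \<in> {0..1}" "\<And>t. t \<in> {0..1} \<Longrightarrow> Sf lam t \<le> Sf lam t3"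
    using continuous_attains_sup[OF compact_Icc _ Sf_cont, of 0 1 lam] by fastforce
  define Smx where "Smx = Sf lam t3"
  have Smx: "\<And>t. 0 \<le> t \<Longrightarrow> t \<le> 1 \<Longrightarrow> Sf lam t \<le> Smx" "Smx > 0"
    using t3 Sf_pos[OF lam, of 1] unfolding Smx_def by (auto, smt (verit) atLeastAtMost_iff)
  define Z' where "Z' = max 1 (Z * Smx / smin)"
  define B where "B = ((1+Cm)/s0)^2 + 2*\<bar>lam\<bar>"
  define c where "c = 2/(p+1)"
  define K where "K = B + c * Z' powr (p-1)"
  have K0: "K \<ge> 0" unfolding K_def B_def c_def using p by simp
  define \<epsilon> where "\<epsilon> = min (1/2) (min (2*\<eta>) (1/(K+1)))"
  have \<epsilon>: "\<epsilon> > 0" unfolding \<epsilon>_def using \<eta> K0 by auto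
  have "\<forall>h. 1 - \<epsilon> < h \<and> h < 1 \<longrightarrow> Z \<le> U h x0"
  proof (intro allI impI, elim conjE)
    fix h assume h1: "1 - \<epsilon> < h" and h2: "h < 1"
    define d where "d = (1-h)/2"
    have hh: "1/2 \<le> h" using h1 unfolding \<epsilon>_def by auto
    have dpos: "0 < d" "d \<le> 1" using h2 hh unfolding d_def by auto
    have de: "d \<le> \<eta>" using h1 unfolding d_def \<epsilon>_def by auto
    have dK: "d * (K+1) < 1"
    proof -
      have e1: "\<epsilon> \<le> 1/(K+1)" unfolding \<epsilon>_def by simp
      define q where "q = 1/(K+1)"
      have "0 < q" using K0 unfolding q_def by simp
      then have "d < q" using h1 e1 unfolding d_def q_def[symmetric] by (simp add: field_simps)
      then have "d < 1/(K+1)" unfolding q_def .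
      then show ?thesis using K0 by (simp add: field_simps)
    qed
    have solh: "is_positive_solution p lam (a_coef h) (U h)" using sol hh h2 by auto
    note k = key[OF p lam hh h2 solh Cm s0]
    define M where "M = max (U h d) (U h (1-d))"
    have m1: "U h d > 0" and m2: "U h (1-d) > 0" using k(3,4) unfolding d_def by auto
    have ineq: "1 \<le> d^2 * B + d^2 * c * M powr (p-1)"
      using k(1) unfolding d_def M_def B_def c_def by simp
    have MZ: "M > Z'"
    proof (rule ccontr)
      assume "\<not> M > Z'"
      then have "M \<le> Z'" by simp
      then have "M powr (p-1) \<le> Z' powr (p-1)" using p m1 unfolding M_def
        by (intro powr_mono2) auto
      then have "d^2 * c * M powr (p-1) \<le> d^2 * c * Z' powr (p-1)"
        using p unfolding c_def by (intro mult_left_mono) auto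
      then have "1 \<le> d^2 * K" using ineq unfolding K_def by (simp add: algebra_simps)
      also have "\<dots> \<le> d * K" using dpos K0
        by (intro mult_right_mono) (auto simp: power2_eq_square mult_left_le_one_le)
      also have "\<dots> < 1" using dK dpos by (simp add: algebra_simps)
      finally show False by simp
    qed
    have xin: "d \<le> x0" "x0 \<le> 1 - d" using de \<eta> by auto
    have fm: "U h x0 * Sf lam h = U h d * Sf lam (1-d-x0) + U h (1-d) * Sf lam (x0-d)"
      using k(2)[of x0] xin unfolding d_def by simp
    have sa: "smin \<le> Sf lam (1-d-x0)" "smin \<le> Sf lam (x0-d)"
      using smin(1) de \<eta> dpos x0 by auto
    have "M * smin \<le> U h d * Sf lam (1-d-x0) + U h (1-d) * Sf lam (x0-d)"
    proof -
      have A1: "U h d * smin \<le> U h d * Sf lam (1-d-x0)" using m1 sa by (intro mult_left_mono) auto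
      have A2: "U h (1-d) * smin \<le> U h (1-d) * Sf lam (x0-d)" using m2 sa by (intro mult_left_mono) auto
      have "0 \<le> U h d * smin" "0 \<le> U h (1-d) * smin" using m1 m2 smin by auto
      then show ?thesis using A1 A2 unfolding M_def by (auto simp: max_def)
    qed
    also have "\<dots> = U h x0 * Sf lam h" using fm by simp
    also have "\<dots> \<le> U h x0 * Smx"
    proof -
      have "U h x0 > 0" using sol_reg[OF solh] x0 by (metis greaterThanLessThan_iff)
      then show ?thesis using Smx(1)[of h] hh h2 by (intro mult_left_mono) auto
    qed
    finally have A: "M * smin \<le> U h x0 * Smx" .
    have "Z * Smx / smin \<le> Z'" unfolding Z'_def by simp
    then have "Z * Smx \<le> Z' * smin" using smin(2) by (simp add: field_simps)
    also have "\<dots> \<le> M * smin" using MZ smin(2) by simp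
    also have "\<dots> \<le> U h x0 * Smx" by (rule A)
    finally show "Z \<le> U h x0" using Smx(2) by simp
  qed
  then show ?thesis using \<epsilon> by blast
qed


theorem theorem3p1:
  fixes p lam :: real and U :: "real \<Rightarrow> real \<Rightarrow> real"
  assumes "p > 1" and "lam < pi^2"
    and "\<And>h. h \<in> {0..<1} \<Longrightarrow> is_positive_solution p lam (a_coef h) (U h)"
  shows "filterlim (\<lambda>h. sup_norm01 (U h)) at_top (at_left 1)
    \<and> (\<forall>x\<in>{0<..<1}. filterlim (\<lambda>h. U h x) at_top (at_left 1))"
proof -
  have ev: "eventually (\<lambda>h. Z \<le> U h x \<and> h \<in> {0..<1}) (at_left 1)" if x: "x \<in> {0<..<1}" for x Z
  proof -
    obtain \<epsilon> where e: "\<epsilon> > 0" "\<forall>h. 1 - \<epsilon> < h \<and> h < 1 \<longrightarrow> Z \<le> U h x"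
      using pointwise_bound[OF assms, of x Z] x by auto
    have "eventually (\<lambda>h. h \<in> {max 0 (1-\<epsilon>)<..<1}) (at_left 1)"
      by (rule eventually_at_left_real) (use e in auto)
    then show ?thesis by (rule eventually_mono) (use e in auto)
  qed
  have A: "\<forall>x\<in>{0<..<1}. filterlim (\<lambda>h. U h x) at_top (at_left 1)"
    unfolding filterlim_at_top using ev by (blast intro: eventually_mono)
  have sup: "U h (1/2) \<le> sup_norm01 (U h)" if h: "h \<in> {0..<1}" for h
  proof -
    obtain v where "continuous_on {0..1} (U h)" using sol_reg[OF assms(3)[OF h]] by metis
    then have "continuous_on {0..1} (\<lambda>x. \<bar>U h x\<bar>)" by (intro continuous_intros)
    then have "compact ((\<lambda>x. \<bar>U h x\<bar>) ` {0..1})" by (intro compact_continuous_image) auto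
    then have "bdd_above ((\<lambda>x. \<bar>U h x\<bar>) ` {0..1})" by (intro bounded_imp_bdd_above compact_imp_bounded)
    then have "\<bar>U h (1/2)\<bar> \<le> sup_norm01 (U h)" unfolding sup_norm01_def
      by (intro cSUP_upper) auto
    then show ?thesis by simp
  qed
  have B: "filterlim (\<lambda>h. sup_norm01 (U h)) at_top (at_left 1)"
    unfolding filterlim_at_top
  proof
    fix Z
    show "eventually (\<lambda>h. Z \<le> sup_norm01 (U h)) (at_left 1)"
    proof (rule eventually_mono[OF ev[of "1/2" Z]])
      show "1/2 \<in> {0<..<(1::real)}" by simp
      fix h assume "Z \<le> U h (1/2) \<and> h \<in> {0..<1}"
      then show "Z \<le> sup_norm01 (U h)" using sup[of h] by linarith
    qed
  qed
  show ?thesis using A B by blast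
qed


end
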